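(* Let $\Theta\in\mathbb{R}^{n\times p}$ be a matrix each of whose rows is monotone (either nondecreasing or nonincreasing). Let $\Theta'=\Theta(I_p-\frac1p ee^\top)$ have singular value decomposition $\Theta'=\sum_{i=1}^r\lambda_i u_iv_i^\top$ with $\lambda_1\ge\cdots\ge\lambda_r>0$, and assume condition (A) holds. Then the leading right singular vector $v_1=(v_{11},\dots,v_{1p})^\top$ satisfies $\sum_{j=1}^p v_{1j}=0$ and $v_{11}\le v_{12}\le\cdots\le v_{1p}$. Moreover, the signs of the components of the leading left singular vector $u_1=(u_{11},\dots,u_{1n})^\top$ indicate the direction of monotonicity of the rows: $u_{1i}\ge 0$ whenever the $i$-th row of $\Theta'$ (equivalently of $\Theta$) is nondecreasing, and $u_{1i}\le0$ whenever it is nonincreasing.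
   Context: $e=(1,\dots,1)^\top\in\mathbb{R}^p$. Condition (A): the largest singular value $\lambda_1$ of $\Theta'$ has multiplicity one, and the first nonzero component of $v_1$ is negative (this fixes the signs of the pair $(u_1,v_1)$). *)

theory Defs
  imports "HOL-Analysis.Analysis"
begin

definition ones_vec :: "real^'n" where
  "ones_vec = (\<chi> i. 1)"

definition outer :: "real^'n \<Rightarrow> real^'p \<Rightarrow> real^'p^'n" where
  "outer u v = (\<chi> i j. u $ i * v $ j)"

definition centered :: "real^'p^'n \<Rightarrow> real^'p^'n" where
  "centered A = A ** (mat 1 - (1 / real CARD('p)) *\<^sub>R outer (ones_vec :: real^'p) (ones_vec :: real^'p))"

definition row_nondecr :: "real^'p::{finite,linorder}^'n \<Rightarrow> 'n \<Rightarrow> bool" where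
  "row_nondecr A i \<longleftrightarrow> (\<forall>j k. j \<le> k \<longrightarrow> A $ i $ j \<le> A $ i $ k)"

definition row_nonincr :: "real^'p::{finite,linorder}^'n \<Rightarrow> 'n \<Rightarrow> bool" where
  "row_nonincr A i \<longleftrightarrow> (\<forall>j k. j \<le> k \<longrightarrow> A $ i $ k \<le> A $ i $ j)"

end

theory Submission imports Defs begin

lemma centered_comp:
  fixes A :: "real^'p^'n"
  shows "centered A $ i $ j = A$i$j - (\<Sum>l\<in>UNIV. A$i$l) / real CARD('p)"
  unfolding centered_def matrix_matrix_mult_def outer_def ones_vec_def mat_def
  by (simp add: right_diff_distrib sum_subtractf sum_divide_distrib if_distrib[of "\<lambda>x. _ * x"] cong: if_cong)

lemma centered_rowsum:
  fixes A :: "real^'p^'n"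
  shows "(\<Sum>j\<in>UNIV. centered A $ i $ j) = 0"
  by (simp add: centered_comp sum_subtractf)

lemma cheb:
  fixes a z :: "real^'p::{finite,linorder}"
  assumes ma: "\<forall>j k. j \<le> k \<longrightarrow> a$j \<le> a$k"
    and mz: "\<forall>j k. j \<le> k \<longrightarrow> z$j \<le> z$k"
    and s: "(\<Sum>j\<in>UNIV. a$j) = 0"
  shows "(\<Sum>j\<in>UNIV. a$j * z$j) \<ge> 0"
proof (cases "\<exists>j. a$j < 0")
  case False
  hence nn: "\<forall>j\<in>UNIV. a$j \<ge> 0" by (simp add: not_less)
  have "\<forall>j\<in>UNIV. a$j = 0" using sum_nonneg_eq_0_iff[of UNIV "\<lambda>j. a$j", OF finite] s nn by blast
  thus ?thesis by simp
next
  case True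
  define N where "N = {j. a$j < 0}"
  have fN: "finite ((\<lambda>j. z$j) ` N)" by simp
  have neN: "(\<lambda>j. z$j) ` N \<noteq> {}" using True N_def by auto
  define c where "c = Max ((\<lambda>j. z$j) ` N)"
  obtain j0 where j0: "j0 \<in> N" "c = z$j0" using Max_in[OF fN neN] c_def by auto
  have "(\<Sum>j\<in>UNIV. a$j * z$j) = (\<Sum>j\<in>UNIV. a$j * (z$j - c)) + c * (\<Sum>j\<in>UNIV. a$j)"
    by (simp add: algebra_simps sum.distrib sum_distrib_left sum_subtractf)
  also have "\<dots> = (\<Sum>j\<in>UNIV. a$j * (z$j - c))" using s by simp
  also have "\<dots> \<ge> 0"
  proof (rule sum_nonneg)
    fix j :: 'p
    consider "a$j < 0" | "a$j = 0" | "a$j > 0" by linarith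
    thus "a$j * (z$j - c) \<ge> 0"
    proof cases
      case 1
      hence "z$j \<le> c" unfolding c_def using fN N_def by (auto intro!: Max_ge)
      thus ?thesis using 1 by (simp add: mult_nonpos_nonpos)
    next
      case 2 thus ?thesis by simp
    next
      case 3
      have "a$j0 < 0" using j0 N_def by auto
      have "j0 < j"
      proof (rule ccontr)
        assume "\<not> j0 < j"
        hence "j \<le> j0" by simp
        hence "a$j \<le> a$j0" using ma by blast
        thus False using 3 \<open>a$j0 < 0\<close> by simp
      qed
      hence "c \<le> z$j" using j0 mz by auto
      thus ?thesis using 3 by simp
    qed
  qed
  finally show ?thesis .
qed


lemma ortho_sum:
  fixes r :: nat
  assumes "\<forall>k\<in>{1..r}. \<forall>l\<in>{1..r}. (w::nat\<Rightarrow>'v::real_inner) k \<bullet> w l = (if k = l then 1 else 0)"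
    and "k \<in> {1..r}"
  shows "(\<Sum>l\<in>{1..r}. f l * (w k \<bullet> w l)) = f k"
proof -
  have "(\<Sum>l\<in>{1..r}. f l * (w k \<bullet> w l)) = (\<Sum>l\<in>{1..r}. if l = k then f l else 0)"
    using assms by (intro sum.cong) auto
  also have "\<dots> = f k" using assms(2) by simp
  finally show ?thesis .
qed

lemma comp_svd:
  fixes M :: "real^'p^'n" and r :: nat
  assumes "M = (\<Sum>k\<in>{1..r}. lam k *\<^sub>R outer (u k) (v k))"
  shows "M$i$j = (\<Sum>k\<in>{1..r}. lam k * (u k$i * v k$j))"
  using assms by (simp add: outer_def)

lemma L1:
  fixes M :: "real^'p^'n" and r :: nat
  assumes "M = (\<Sum>k\<in>{1..r}. lam k *\<^sub>R outer (u k) (v k))"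
  shows "(\<Sum>j\<in>UNIV. M$i$j * z$j) = (\<Sum>k\<in>{1..r}. lam k * (v k \<bullet> z) * u k$i)"
  unfolding comp_svd[OF assms] inner_vec_def
  by (simp add: sum_distrib_left sum_distrib_right sum.swap[of _ UNIV] mult_ac)

lemma L2:
  fixes M :: "real^'p^'n" and r :: nat
  assumes "M = (\<Sum>k\<in>{1..r}. lam k *\<^sub>R outer (u k) (v k))"
  shows "(\<Sum>i\<in>UNIV. w$i * M$i$j) = (\<Sum>k\<in>{1..r}. lam k * (u k \<bullet> w) * v k$j)"
  unfolding comp_svd[OF assms] inner_vec_def
  by (simp add: sum_distrib_left sum_distrib_right sum.swap[of _ UNIV] mult_ac)

definition Sop :: "real^'p^'n \<Rightarrow> real^'p \<Rightarrow> real^'p" where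
  "Sop M z = (\<chi> j. \<Sum>i\<in>UNIV. (\<Sum>l\<in>UNIV. M$i$l * z$l) * M$i$j)"

lemma L3:
  fixes M :: "real^'p^'n" and r :: nat
  assumes svd: "M = (\<Sum>k\<in>{1..r}. lam k *\<^sub>R outer (u k) (v k))"
    and uo: "\<forall>k\<in>{1..r}. \<forall>l\<in>{1..r}. u k \<bullet> u l = (if k = l then 1 else 0)"
  shows "Sop M z $ j = (\<Sum>k\<in>{1..r}. lam k ^ 2 * (v k \<bullet> z) * v k$j)"
proof -
  define w :: "real^'n" where "w = (\<chi> i. \<Sum>l\<in>UNIV. M$i$l * z$l)"
  have "Sop M z $ j = (\<Sum>i\<in>UNIV. w$i * M$i$j)" by (simp add: Sop_def w_def)
  also have "\<dots> = (\<Sum>k\<in>{1..r}. lam k * (u k \<bullet> w) * v k$j)" by (rule L2[OF svd])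
  also have "\<dots> = (\<Sum>k\<in>{1..r}. lam k ^ 2 * (v k \<bullet> z) * v k$j)"
  proof (rule sum.cong[OF refl])
    fix k assume k: "k \<in> {1..r}"
    have "w = (\<Sum>l\<in>{1..r}. (lam l * (v l \<bullet> z)) *\<^sub>R u l)"
      unfolding w_def L1[OF svd] by (simp add: vec_eq_iff mult_ac)
    hence "u k \<bullet> w = (\<Sum>l\<in>{1..r}. (lam l * (v l \<bullet> z)) * (u k \<bullet> u l))"
      by (simp add: inner_sum_right)
    also have "\<dots> = lam k * (v k \<bullet> z)" by (rule ortho_sum[OF uo k])
    finally show "lam k * (u k \<bullet> w) * v k$j = lam k ^ 2 * (v k \<bullet> z) * v k$j"
      by (simp add: power2_eq_square)
  qed
  finally show ?thesis .
qed

lemma L4: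
  fixes M :: "real^'p^'n" and r :: nat
  assumes svd: "M = (\<Sum>k\<in>{1..r}. lam k *\<^sub>R outer (u k) (v k))"
    and uo: "\<forall>k\<in>{1..r}. \<forall>l\<in>{1..r}. u k \<bullet> u l = (if k = l then 1 else 0)"
    and vo: "\<forall>k\<in>{1..r}. \<forall>l\<in>{1..r}. v k \<bullet> v l = (if k = l then 1 else 0)"
  shows "((Sop M) ^^ Suc m) x $ j = (\<Sum>k\<in>{1..r}. lam k ^ (2 * Suc m) * (v k \<bullet> x) * v k$j)"
proof (induction m arbitrary: j)
  case 0 thus ?case using L3[OF svd uo] by simp
next
  case (Suc m)
  let ?y = "((Sop M) ^^ Suc m) x"
  have "((Sop M) ^^ Suc (Suc m)) x $ j = (\<Sum>k\<in>{1..r}. lam k ^ 2 * (v k \<bullet> ?y) * v k$j)"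
    using L3[OF svd uo] by simp
  also have "\<dots> = (\<Sum>k\<in>{1..r}. lam k ^ (2 * Suc (Suc m)) * (v k \<bullet> x) * v k$j)"
  proof (rule sum.cong[OF refl])
    fix k assume k: "k \<in> {1..r}"
    have "?y = (\<Sum>l\<in>{1..r}. (lam l ^ (2 * Suc m) * (v l \<bullet> x)) *\<^sub>R v l)"
      using Suc by (simp add: vec_eq_iff mult_ac)
    hence "v k \<bullet> ?y = (\<Sum>l\<in>{1..r}. (lam l ^ (2 * Suc m) * (v l \<bullet> x)) * (v k \<bullet> v l))"
      by (simp add: inner_sum_right)
    also have "\<dots> = lam k ^ (2 * Suc m) * (v k \<bullet> x)" by (rule ortho_sum[OF vo k])
    finally show "lam k ^ 2 * (v k \<bullet> ?y) * v k$j = lam k ^ (2 * Suc (Suc m)) * (v k \<bullet> x) * v k$j"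
      by (simp add: power_add[symmetric] mult_ac)
  qed
  finally show ?case .
qed


lemma rows_M:
  fixes Th :: "real^'p::{finite,linorder}^'n"
  shows "row_nondecr Th i \<Longrightarrow> (\<forall>j k. j \<le> k \<longrightarrow> centered Th $ i $ j \<le> centered Th $ i $ k)"
    and "row_nonincr Th i \<Longrightarrow> (\<forall>j k. j \<le> k \<longrightarrow> (- centered Th $ i) $ j \<le> (- centered Th $ i) $ k)"
  by (auto simp: centered_comp row_nondecr_def row_nonincr_def)

lemma Sop_mono:
  fixes Th :: "real^'p::{finite,linorder}^'n"
  assumes mono_rows: "\<forall>i. row_nondecr Th i \<or> row_nonincr Th i"
    and mz: "\<forall>j k. j \<le> k \<longrightarrow> z$j \<le> z$k"
  shows "\<forall>j k. j \<le> k \<longrightarrow> Sop (centered Th) z $ j \<le> Sop (centered Th) z $ k"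
proof (intro allI impI)
  fix j k :: 'p assume jk: "j \<le> k"
  let ?M = "centered Th"
  have "Sop ?M z $ k - Sop ?M z $ j = (\<Sum>i\<in>UNIV. (\<Sum>l\<in>UNIV. ?M$i$l * z$l) * (?M$i$k - ?M$i$j))"
    by (simp add: Sop_def sum_subtractf algebra_simps)
  also have "\<dots> \<ge> 0"
  proof (rule sum_nonneg)
    fix i
    show "0 \<le> (\<Sum>l\<in>UNIV. ?M$i$l * z$l) * (?M$i$k - ?M$i$j)"
    proof (cases "row_nondecr Th i")
      case True
      note r = rows_M(1)[OF True]
      have "(\<Sum>l\<in>UNIV. ?M$i$l * z$l) \<ge> 0"
        by (rule cheb[OF r mz]) (simp add: centered_rowsum)
      moreover have "?M$i$k - ?M$i$j \<ge> 0" using r jk by auto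
      ultimately show ?thesis by simp
    next
      case False
      hence r: "\<forall>j k. j \<le> k \<longrightarrow> (- ?M $ i) $ j \<le> (- ?M $ i) $ k"
        using rows_M(2) mono_rows by blast
      have "(\<Sum>l\<in>UNIV. (- ?M$i)$l * z$l) \<ge> 0"
        by (rule cheb[OF r mz]) (simp add: centered_rowsum sum_negf)
      hence "(\<Sum>l\<in>UNIV. ?M$i$l * z$l) \<le> 0" by (simp add: sum_negf)
      moreover have "?M$i$k - ?M$i$j \<le> 0" using r jk by auto
      ultimately show ?thesis by (simp add: mult_nonpos_nonpos)
    qed
  qed
  finally show "Sop ?M z $ j \<le> Sop ?M z $ k" by simp
qed

lemma geq_lem:
  fixes lam a b d :: "nat \<Rightarrow> real" and c :: real
  shows "(\<Sum>l\<in>A. (lam l / c)^N * (a l * (b l - d l))) = ((\<Sum>l\<in>A. lam l^N * a l * b l) - (\<Sum>l\<in>A. lam l^N * a l * d l)) / c^N"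
proof -
  have "(\<Sum>l\<in>A. lam l^N * a l * b l) - (\<Sum>l\<in>A. lam l^N * a l * d l) = (\<Sum>l\<in>A. lam l^N * (a l * (b l - d l)))"
    by (simp only: sum_subtractf[symmetric] right_diff_distrib mult.assoc)
  hence "((\<Sum>l\<in>A. lam l^N * a l * b l) - (\<Sum>l\<in>A. lam l^N * a l * d l)) / c^N = (\<Sum>l\<in>A. lam l^N * (a l * (b l - d l)) / c^N)"
    by (simp only: sum_divide_distrib)
  also have "\<dots> = (\<Sum>l\<in>A. (lam l / c)^N * (a l * (b l - d l)))"
    by (simp only: power_divide times_divide_eq_left)
  finally show ?thesis by simp
qed
lemma sq_lt1: "0 < (p::real) \<Longrightarrow> p < c \<Longrightarrow> \<bar>(p/c)^2\<bar> < 1"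
  by (simp add: abs_square_less_1)
lemma pw: "(x::real) ^ (2 * Suc m) * C = (x^2) ^ Suc m * C"
  by (simp only: power_mult)

theorem proposition1:
  fixes Th :: "real^'p::{finite,linorder}^'n"
    and r :: nat and lam :: "nat \<Rightarrow> real"
    and u :: "nat \<Rightarrow> real^'n" and v :: "nat \<Rightarrow> real^'p::{finite,linorder}"
  assumes mono_rows: "\<forall>i. row_nondecr Th i \<or> row_nonincr Th i"
    and r_pos: "1 \<le> r"
    and svd: "centered Th = (\<Sum>k\<in>{1..r}. lam k *\<^sub>R outer (u k) (v k))"
    and u_orth: "\<forall>k\<in>{1..r}. \<forall>l\<in>{1..r}. u k \<bullet> u l = (if k = l then 1 else 0)"
    and v_orth: "\<forall>k\<in>{1..r}. \<forall>l\<in>{1..r}. v k \<bullet> v l = (if k = l then 1 else 0)"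
    and lam_decr: "\<forall>k l. 1 \<le> k \<longrightarrow> k \<le> l \<longrightarrow> l \<le> r \<longrightarrow> lam l \<le> lam k"
    and lam_pos: "lam r > 0"
    and condA_mult: "r \<ge> 2 \<longrightarrow> lam 2 < lam 1"
    and condA_sign: "\<exists>j. v 1 $ j < 0 \<and> (\<forall>k<j. v 1 $ k = 0)"
  shows "(\<Sum>j\<in>UNIV. v 1 $ j) = 0
         \<and> (\<forall>j k. j \<le> k \<longrightarrow> v 1 $ j \<le> v 1 $ k)
         \<and> (\<forall>i. row_nondecr Th i \<longrightarrow> u 1 $ i \<ge> 0)
         \<and> (\<forall>i. row_nonincr Th i \<longrightarrow> u 1 $ i \<le> 0)"
proof -
  define M where "M = centered Th"
  have svdM: "M = (\<Sum>k\<in>{1..r}. lam k *\<^sub>R outer (u k) (v k))" using svd M_def by simp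
  have one: "(1::nat) \<in> {1..r}" using r_pos by simp
  have "lam r \<le> lam 1" using lam_decr r_pos by simp
  hence lam1: "lam 1 > 0" using lam_pos by linarith
  have F1: "(\<Sum>j\<in>UNIV. M$i$j * v 1$j) = lam 1 * u 1$i" for i
  proof -
    have "(\<Sum>j\<in>UNIV. M$i$j * v 1$j) = (\<Sum>k\<in>{1..r}. (lam k * u k$i) * (v 1 \<bullet> v k))"
      unfolding L1[OF svdM] by (intro sum.cong) (auto simp: inner_commute mult_ac)
    also have "\<dots> = lam 1 * u 1$i" by (rule ortho_sum[OF v_orth one])
    finally show ?thesis .
  qed
  have F2: "(\<Sum>i\<in>UNIV. u 1$i * M$i$j) = lam 1 * v 1$j" for j
  proof -
    have "(\<Sum>i\<in>UNIV. u 1$i * M$i$j) = (\<Sum>k\<in>{1..r}. (lam k * v k$j) * (u 1 \<bullet> u k))"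
      unfolding L2[OF svdM] by (intro sum.cong) (auto simp: inner_commute mult_ac)
    also have "\<dots> = lam 1 * v 1$j" by (rule ortho_sum[OF u_orth one])
    finally show ?thesis .
  qed
  have v1eq: "v 1$j = (\<Sum>i\<in>UNIV. u 1$i * M$i$j) / lam 1" for j using F2[of j] lam1 by simp
  have u1eq: "u 1$i = (\<Sum>j\<in>UNIV. M$i$j * v 1$j) / lam 1" for i using F1[of i] lam1 by simp
  have rowsum: "(\<Sum>j\<in>UNIV. M$i$j) = 0" for i unfolding M_def by (rule centered_rowsum)
  have S0: "(\<Sum>j\<in>UNIV. v 1 $ j) = 0"
  proof -
    have "(\<Sum>j\<in>UNIV. v 1 $ j) = (\<Sum>j\<in>UNIV. (\<Sum>i\<in>UNIV. u 1$i * M$i$j) / lam 1)"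
      by (rule sum.cong[OF refl]) (rule v1eq)
    also have "\<dots> = (\<Sum>j\<in>UNIV. \<Sum>i\<in>UNIV. u 1$i * M$i$j) / lam 1"
      by (simp only: sum_divide_distrib)
    also have "\<dots> = (\<Sum>i\<in>UNIV. \<Sum>j\<in>UNIV. u 1$i * M$i$j) / lam 1"
      by (subst sum.swap) (rule refl)
    also have "\<dots> = (\<Sum>i\<in>UNIV. u 1$i * (\<Sum>j\<in>UNIV. M$i$j)) / lam 1"
      by (simp only: sum_distrib_left)
    also have "\<dots> = 0" by (simp add: rowsum)
    finally show ?thesis .
  qed
  have "\<exists>i. (\<Sum>j\<in>UNIV. M$i$j * v 1$j) \<noteq> 0"
  proof (rule ccontr)
    assume "\<not> ?thesis"
    hence z: "\<forall>i. (\<Sum>j\<in>UNIV. M$i$j * v 1$j) = 0" by blast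
    have "1 = v 1 \<bullet> v 1" using v_orth one by auto
    also have "\<dots> = (\<Sum>j\<in>UNIV. (\<Sum>i\<in>UNIV. u 1$i * M$i$j) / lam 1 * v 1$j)"
      unfolding inner_vec_def inner_real_def by (intro sum.cong refl) (subst (1) v1eq, simp only: times_divide_eq_left)
    also have "\<dots> = (\<Sum>j\<in>UNIV. \<Sum>i\<in>UNIV. u 1$i * (M$i$j * v 1$j)) / lam 1"
      unfolding sum_divide_distrib
      by (intro sum.cong refl) (simp only: sum_distrib_right times_divide_eq_left mult.assoc)
    also have "\<dots> = (\<Sum>i\<in>UNIV. \<Sum>j\<in>UNIV. u 1$i * (M$i$j * v 1$j)) / lam 1"
      by (subst sum.swap) (rule refl)
    also have "\<dots> = (\<Sum>i\<in>UNIV. u 1$i * (\<Sum>j\<in>UNIV. M$i$j * v 1$j)) / lam 1"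
      by (simp only: sum_distrib_left)
    also have "\<dots> = 0" using z by simp
    finally show False by simp
  qed
  then obtain i0 where i0: "(\<Sum>j\<in>UNIV. M$i0$j * v 1$j) \<noteq> 0" by blast
  obtain x :: "real^'p::{finite,linorder}" where xm: "\<forall>j k. j \<le> k \<longrightarrow> x$j \<le> x$k" and xv: "v 1 \<bullet> x \<noteq> 0"
  proof (cases "row_nondecr Th i0")
    case True
    show ?thesis
    proof (rule that[of "M$i0"])
      show "\<forall>j k. j \<le> k \<longrightarrow> (M$i0)$j \<le> (M$i0)$k" using rows_M(1)[OF True] M_def by simp
      show "v 1 \<bullet> M$i0 \<noteq> 0" using i0 by (simp add: inner_vec_def mult_ac)
    qed
  next
    case False
    hence nc: "row_nonincr Th i0" using mono_rows by blast
    show ?thesis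
    proof (rule that[of "- M$i0"])
      show "\<forall>j k. j \<le> k \<longrightarrow> (- M$i0)$j \<le> (- M$i0)$k" using rows_M(2)[OF nc] M_def by simp
      show "v 1 \<bullet> (- M$i0) \<noteq> 0" using i0 by (simp add: inner_vec_def mult_ac sum_negf)
    qed
  qed
  have itm: "\<forall>j k. j \<le> k \<longrightarrow> ((Sop M) ^^ m) x $ j \<le> ((Sop M) ^^ m) x $ k" for m
  proof (induction m)
    case 0 thus ?case using xm by simp
  next
    case (Suc m) thus ?case unfolding M_def using Sop_mono[OF mono_rows] by simp
  qed
  have keyineq: "(v 1 \<bullet> x) * (v 1$k - v 1$j) \<ge> 0" if jk: "j \<le> k" for j k
  proof -
    define C where "C l = (v l \<bullet> x) * (v l$k - v l$j)" for l
    define g where "g m = (\<Sum>l\<in>{1..r}. (lam l / lam 1) ^ (2 * Suc m) * C l)" for m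
    have geq: "g m = (((Sop M) ^^ Suc m) x $ k - ((Sop M) ^^ Suc m) x $ j) / lam 1 ^ (2 * Suc m)" for m
      unfolding g_def L4[OF svdM u_orth v_orth] C_def by (rule geq_lem)
    have gnn: "g m \<ge> 0" for m
    proof -
      have "((Sop M) ^^ Suc m) x $ j \<le> ((Sop M) ^^ Suc m) x $ k" using itm[of "Suc m"] jk by blast
      thus ?thesis unfolding geq using lam1 by (intro divide_nonneg_pos) simp_all
    qed
    have lim: "(\<lambda>m. (lam l / lam 1) ^ (2 * Suc m) * C l) \<longlonglongrightarrow> (if l = 1 then C l else 0)"
      if l: "l \<in> {1..r}" for l
    proof (cases "l = 1")
      case True thus ?thesis using lam1 by simp
    next
      case False
      hence l2: "2 \<le> l" "l \<le> r" using l by auto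
      have "lam r \<le> lam l" using lam_decr l2 by auto
      hence p: "lam l > 0" using lam_pos by simp
      have "lam l \<le> lam 2" using lam_decr l2 by auto
      hence "lam l < lam 1" using condA_mult l2 by simp
      hence q: "\<bar>(lam l / lam 1)^2\<bar> < 1" using p by (rule sq_lt1[rotated])
      have "(\<lambda>m. ((lam l / lam 1)^2) ^ Suc m) \<longlonglongrightarrow> 0"
        using LIMSEQ_Suc[OF LIMSEQ_abs_realpow_zero2[OF q]] by simp
      hence "(\<lambda>m. ((lam l / lam 1)^2) ^ Suc m * C l) \<longlonglongrightarrow> 0 * C l"
        by (intro tendsto_mult tendsto_const)
      hence "(\<lambda>m. ((lam l / lam 1)^2) ^ Suc m * C l) \<longlonglongrightarrow> 0" by (simp only: mult_zero_left)
      moreover have "(\<lambda>m. (lam l / lam 1) ^ (2 * Suc m) * C l) = (\<lambda>m. ((lam l / lam 1)^2) ^ Suc m * C l)"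
        by (simp only: pw)
      ultimately show ?thesis using False by simp
    qed
    have "g \<longlonglongrightarrow> (\<Sum>l\<in>{1..r}. if l = 1 then C l else 0)"
      unfolding g_def by (rule tendsto_sum) (rule lim)
    hence "g \<longlonglongrightarrow> C 1" using one by simp
    hence "C 1 \<ge> 0" using gnn by (intro LIMSEQ_le_const) auto
    thus ?thesis by (simp add: C_def)
  qed
  have vmono: "\<forall>j k. j \<le> k \<longrightarrow> v 1 $ j \<le> v 1 $ k"
  proof (cases "v 1 \<bullet> x > 0")
    case True
    show ?thesis
    proof (intro allI impI)
      fix j k :: 'p assume "j \<le> k"
      hence "(v 1 \<bullet> x) * (v 1$k - v 1$j) \<ge> 0" by (rule keyineq)
      thus "v 1 $ j \<le> v 1 $ k" using True by (simp add: zero_le_mult_iff)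
    qed
  next
    case False
    hence neg: "v 1 \<bullet> x < 0" using xv by simp
    have ni: "v 1$k \<le> v 1$j" if "j \<le> k" for j k
      using keyineq[OF that] neg by (simp add: zero_le_mult_iff)
    obtain j0 where j0: "v 1 $ j0 < 0" "\<forall>k<j0. v 1 $ k = 0" using condA_sign by blast
    have allnp: "v 1 $ k \<le> 0" for k
    proof (cases "k < j0")
      case True thus ?thesis using j0 by simp
    next
      case False
      hence "j0 \<le> k" by (simp add: not_less)
      hence "v 1$k \<le> v 1$j0" by (rule ni)
      thus ?thesis using j0(1) by simp
    qed
    have "(\<Sum>j\<in>UNIV. v 1 $ j) = v 1 $ j0 + (\<Sum>j\<in>UNIV - {j0}. v 1 $ j)"
      by (simp add: sum.remove)
    also have "\<dots> < 0" using j0(1) sum_nonpos[of "UNIV - {j0}" "\<lambda>j. v 1 $ j"] allnp by force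
    finally show ?thesis using S0 by simp
  qed
  have U1: "u 1 $ i \<ge> 0" if "row_nondecr Th i" for i
  proof -
    have "(\<Sum>j\<in>UNIV. M$i$j * v 1$j) \<ge> 0"
      by (rule cheb[OF _ vmono]) (use rows_M(1)[OF that] M_def rowsum in auto)
    thus ?thesis using u1eq[of i] lam1 by simp
  qed
  have U2: "u 1 $ i \<le> 0" if "row_nonincr Th i" for i
  proof -
    have "(\<Sum>j\<in>UNIV. (- M$i)$j * v 1$j) \<ge> 0"
      by (rule cheb[OF _ vmono]) (use rows_M(2)[OF that] M_def rowsum in \<open>auto simp: sum_negf\<close>)
    hence "(\<Sum>j\<in>UNIV. M$i$j * v 1$j) \<le> 0" by (simp add: sum_negf)
    thus ?thesis using u1eq[of i] lam1 by (simp add: divide_nonpos_pos)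
  qed
  show ?thesis using S0 vmono U1 U2 by blast
qed

end
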